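(* Let $R:\mathbb{N}\to[0,1]$ satisfy $R(n)\to0$. Then there exist numbers $p_1,p_2,\ldots\ge0$ with $\sum_{k\ge1}p_k=1$, two strictly increasing sequences of positive integers $(n_i)_{i\ge1}$ and $(k_i)_{i\ge1}$, and a constant $C\in[\tfrac12,1]$ such that for all $i>1$: (a) $\sum_{k>k_i}p_k\le\frac{1}{n_i}$; (b) $n_ip_{k_i}\le k_i$; (c) $p_{k_i}=CR(n_i)$. *)

theory Defs
  imports Complex_Main
begin

end

theory Submission
  imports Defs
begin

lemma strict_monoI_Suc: "(\<And>n. f n < f (Suc n)) \<Longrightarrow> strict_mono (f :: nat \<Rightarrow> 'b::order)"
  using strict_mono_Suc_iff by blast

lemma tail_reindex:
  fixes f :: "nat \<Rightarrow> real" and g :: "nat \<Rightarrow> nat"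
  assumes sm: "strict_mono g"
    and zero: "\<And>j. j \<notin> range g \<Longrightarrow> f j = 0"
    and below: "\<And>m. m < m0 \<Longrightarrow> g m < N"
    and above: "N \<le> g m0"
    and s: "(\<lambda>m. f (g (m0 + m))) sums c"
  shows "(\<lambda>j. f (N + j)) sums c"
proof -
  define g' where "g' m = g (m0 + m) - N" for m
  have ge: "N \<le> g (m0 + m)" for m
    using above strict_mono_less_eq[OF sm, of m0 "m0+m"] by simp
  have "strict_mono g'"
  proof (rule strict_monoI_Suc)
    fix m
    have "g (m0 + m) < g (m0 + Suc m)" using sm by (simp add: strict_mono_def)
    then show "g' m < g' (Suc m)" using ge[of m] ge[of "Suc m"] unfolding g'_def by linarith
  qed
  moreover have "f (N + j) = 0" if "j \<notin> range g'" for j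
  proof (rule ccontr)
    assume "f (N + j) \<noteq> 0"
    then obtain m where m: "N + j = g m" using zero by blast
    have "\<not> m < m0" using below[of m] m by linarith
    then have "j = g' (m - m0)" unfolding g'_def using m by simp
    with that show False by blast
  qed
  ultimately have "(\<lambda>m. f (N + g' m)) sums c \<longleftrightarrow> (\<lambda>j. f (N + j)) sums c"
    by (rule sums_mono_reindex)
  moreover have "(\<lambda>m. f (N + g' m)) = (\<lambda>m. f (g (m0 + m)))"
    using ge unfolding g'_def by (simp add: fun_eq_iff)
  ultimately show ?thesis using s by simp
qed

theorem mainTheorem14:
  fixes R :: "nat \<Rightarrow> real"
  assumes R_range: "\<forall>n\<ge>1. 0 \<le> R n \<and> R n \<le> 1"
    and R_lim: "R \<longlonglongrightarrow> 0"
  shows "\<exists>(p :: nat \<Rightarrow> real) (n :: nat \<Rightarrow> nat) (k :: nat \<Rightarrow> nat) (C :: real).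
           (\<forall>j\<ge>1. p j \<ge> 0) \<and> (\<lambda>j. p (Suc j)) sums 1 \<and>
           strict_mono_on {1..} n \<and> strict_mono_on {1..} k \<and>
           (\<forall>i\<ge>1. n i > 0 \<and> k i > 0) \<and>
           1/2 \<le> C \<and> C \<le> 1 \<and>
           (\<forall>i>1. (\<Sum>j. p (Suc (k i) + j)) \<le> 1 / real (n i) \<and>
                  real (n i) * p (k i) \<le> real (k i) \<and>
                  p (k i) = C * R (n i))"
proof -
  have "\<forall>e. \<exists>N. e > 0 \<longrightarrow> (\<forall>m\<ge>N. \<bar>R m\<bar> < e)"
    using R_lim unfolding LIMSEQ_iff by simp
  then obtain M where M: "\<And>e m. e > 0 \<Longrightarrow> m \<ge> M e \<Longrightarrow> \<bar>R m\<bar> < e" by metis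
  define n where "n = rec_nat (1::nat) (\<lambda>i ni. max (ni+1) (M (1/(2^Suc i * real ni))))"
  have n0: "n 0 = 1" unfolding n_def by simp
  have nS: "n (Suc i) = max (n i + 1) (M (1/(2^Suc i * real (n i))))" for i
    unfolding n_def by simp
  have npos: "n i \<ge> 1" for i by (induction i) (auto simp: n0 nS)
  have nlt: "n i < n (Suc i)" for i by (simp add: nS)
  have smn: "strict_mono n" by (rule strict_monoI_Suc) (rule nlt)
  have Rnn: "0 \<le> R (n i)" "R (n i) \<le> 1" for i using R_range npos[of i] by auto
  have RnS: "R (n (Suc i)) \<le> (1/2)^Suc i / real (n i)" for i
  proof -
    have e: "1/(2^Suc i * real (n i)) > 0" using npos[of i] by simp
    have "M (1/(2^Suc i * real (n i))) \<le> n (Suc i)" by (simp add: nS)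
    from M[OF e this] have "R (n (Suc i)) < 1/(2^Suc i * real (n i))" by simp
    also have "\<dots> = (1/2)^Suc i / real (n i)" by (simp add: power_divide)
    finally show ?thesis by simp
  qed
  have Rgeo: "R (n i) \<le> (1/2)^i" for i
  proof (cases i)
    case 0 then show ?thesis using Rnn by simp
  next
    case (Suc j)
    have "(1/2::real)^Suc j / real (n j) \<le> (1/2)^Suc j"
      using npos[of j] by (simp add: divide_le_eq)
    then show ?thesis using RnS[of j] Suc by simp
  qed
  define r where "r i = R (n i) / 2" for i
  have geo: "(\<lambda>i. (1/2::real)^i / 2) sums 1"
    using sums_divide[OF geometric_sums[of "1/2::real"], of 2] by simp
  have rle: "r i \<le> (1/2)^i / 2" for i using Rgeo[of i] unfolding r_def by simp
  have r0: "0 \<le> r i" for i using Rnn unfolding r_def by simp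
  have rsum: "summable r"
    by (rule summable_comparison_test[OF _ sums_summable[OF geo]]) (use rle r0 in auto)
  define S where "S = suminf r"
  have S1: "S \<le> 1" unfolding S_def
    using suminf_le[OF rle rsum sums_summable[OF geo]] sums_unique[OF geo] by simp
  define b where "b i = (case i of 0 \<Rightarrow> 1 - S | Suc j \<Rightarrow> r j)" for i
  have b0: "0 \<le> b i" for i using S1 r0 by (cases i) (auto simp: b_def)
  have "(\<lambda>i. b (Suc i)) sums S" using summable_sums[OF rsum] unfolding S_def b_def by simp
  then have bs: "b sums 1" using sums_Suc_iff[of b S] by (simp add: b_def)
  define h where "h i = (case i of 0 \<Rightarrow> 0 | Suc j \<Rightarrow> n j + 1)" for i
  have smh: "strict_mono h"
  proof (rule strict_monoI_Suc)
    fix i show "h i < h (Suc i)" using nlt by (cases i) (auto simp: h_def)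
  qed
  have injh: "inj h" using smh by (rule strict_mono_imp_inj_on)
  define a where "a j = (if j \<in> range h then b (inv h j) else 0)" for j
  have ah: "a (h m) = b m" for m unfolding a_def using injh by simp
  have a0: "0 \<le> a j" for j using b0 by (simp add: a_def)
  have "(\<lambda>m. a (h m)) sums 1 \<longleftrightarrow> a sums 1"
    by (rule sums_mono_reindex[OF smh]) (simp add: a_def)
  then have as: "a sums 1" using bs by (simp add: ah)
  define p where "p j = a (j - 1)" for j
  define k where "k i = n i + 2" for i
  have pS: "p (Suc j) = a j" for j by (simp add: p_def)
  have pk: "p (k i) = 1/2 * R (n i)" for i
  proof -
    have "p (k i) = a (h (Suc i))" by (simp add: p_def k_def h_def)
    also have "\<dots> = r i" by (simp add: ah b_def)
    finally show ?thesis by (simp add: r_def)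
  qed
  have tail: "(\<Sum>j. p (Suc (k i) + j)) \<le> 1 / real (n i)" for i
  proof -
    have e1: "(\<lambda>j. p (Suc (k i) + j)) = (\<lambda>j. a (n i + 2 + j))"
      by (simp add: p_def k_def)
    have hb: "\<And>m. m < Suc (Suc i) \<Longrightarrow> h m < n i + 2"
    proof -
      fix m assume "m < Suc (Suc i)"
      then have "h m \<le> h (Suc i)" using strict_mono_less_eq[OF smh] by simp
      then show "h m < n i + 2" by (simp add: h_def)
    qed
    have ha: "n i + 2 \<le> h (Suc (Suc i))" using nlt[of i] by (simp add: h_def)
    have e2: "(\<lambda>m. a (h (Suc (Suc i) + m))) = (\<lambda>m. r (Suc i + m))"
      by (simp add: ah b_def)
    have ts: "(\<lambda>m. r (Suc i + m)) sums (\<Sum>m. r (Suc i + m))"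
      using summable_ignore_initial_segment[OF rsum, of "Suc i"]
      by (simp add: summable_sums add.commute)
    have "(\<lambda>j. a (n i + 2 + j)) sums (\<Sum>m. r (Suc i + m))"
      by (rule tail_reindex[OF smh _ hb ha]) (use ts e2 in \<open>auto simp: a_def\<close>)
    then have tv: "(\<Sum>j. p (Suc (k i) + j)) = (\<Sum>m. r (Suc i + m))"
      using e1 sums_unique by metis
    define d where "d = (\<lambda>m. (1/2::real)^m / (4 * real (n i)))"
    have ds: "d sums (2 * (1/(4 * real (n i))))"
      using sums_mult2[OF geometric_sums[of "1/2::real"], of "1/(4 * real (n i))"]
      by (simp add: d_def)
    have dle: "r (Suc i + m) \<le> d m" for m
    proof -
      have "r (Suc i + m) = R (n (Suc (i + m))) / 2" by (simp add: r_def)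
      also have "\<dots> \<le> (1/2)^Suc (i+m) / real (n (i+m)) / 2"
        using RnS[of "i+m"] by simp
      also have "\<dots> \<le> (1/2)^Suc m / real (n i) / 2"
      proof -
        have "(1/2::real)^Suc (i+m) \<le> (1/2)^Suc m" by (rule power_decreasing) auto
        moreover have "real (n i) \<le> real (n (i+m))"
          using strict_mono_less_eq[OF smn, of i "i+m"] by simp
        moreover have "real (n i) > 0" using npos[of i] by simp
        ultimately show ?thesis by (simp add: frac_le divide_right_mono)
      qed
      also have "\<dots> = d m" by (simp add: d_def field_simps)
      finally show ?thesis .
    qed
    have "(\<Sum>m. r (Suc i + m)) \<le> suminf d"
      by (rule suminf_le[OF dle]) (use ts ds in \<open>auto simp: sums_iff\<close>)
    also have "\<dots> = 1 / (2 * real (n i))" using sums_unique[OF ds] by simp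
    also have "\<dots> \<le> 1 / real (n i)" using npos[of i] by (simp add: frac_le)
    finally show ?thesis using tv by simp
  qed
  have bk: "real (n i) * p (k i) \<le> real (k i)" for i
  proof -
    have "real (n i) * p (k i) \<le> real (n i) * 1"
      using pk[of i] Rnn[of i] by (intro mult_left_mono) auto
    then show ?thesis by (simp add: k_def)
  qed
  have smk: "strict_mono k" using smn by (simp add: strict_mono_def k_def)
  show ?thesis
    apply (rule exI[of _ p], rule exI[of _ n], rule exI[of _ k], rule exI[of _ "1/2"])
    using a0 as pS tail bk pk npos smn smk
    by (auto simp: p_def k_def strict_mono_on_def strict_mono_def Suc_le_eq)
qed

end
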